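(* Let $(\mathbf{x}^1,y_l^1,y_r^1),\dots,(\mathbf{x}^T,y_l^T,y_r^T)$ be a sequence of examples with $\mathbf{x}^t\in\mathbb{R}^d$ and integers $1\le y_l^t\le y_r^t\le K$, presented to the PA algorithm started from $\mathbf{w}^1=\mathbf{0}$, $\boldsymbol\theta^1=\mathbf{0}$. Let $\mathbf{v}^*=(\mathbf{u}^*,\mathbf{b}^* )$, $\mathbf{u}^*\in\mathbb{R}^d$, $\mathbf{b}^*\in\mathbb{R}^{K-1}$, be an ideal classifier: $\mathbf{u}^*\cdot\mathbf{x}^t-b_i^*\ge1$ for all $i\in\{1,\dots,y_l^t-1\}$ and all $t\in[T]$, and $\mathbf{u}^*\cdot\mathbf{x}^t-b_i^*\le-1$ for all $i\in\{y_r^t,\dots,K-1\}$ and all $t\in[T]$. Let $c=\min_{t\in[T]}(y_r^t-y_l^t)$ and $R^2=\max_{t\in[T]}\Vert\mathbf{x}^t\Vert^2$. Then $$\sum_{t=1}^T\sum_{i=1}^{K-1}(l_i^t)^2\le\Vert\mathbf{v}^*\Vert^2\left(1+R^2(K-c-1)\right),$$ where $\Vert\mathbf{v}^*\Vert^2=\Vert\mathbf{u}^*\Vert^2+\Vert\mathbf{b}^*\Vert^2$.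
   Context: PA algorithm: at trial $t$, $(\mathbf{w}^{t+1},\boldsymbol\theta^{t+1})$ is the unique minimizer of $\tfrac12\Vert\mathbf{w}-\mathbf{w}^t\Vert^2+\tfrac12\Vert\boldsymbol\theta-\boldsymbol\theta^t\Vert^2$ subject to $\mathbf{w}\cdot\mathbf{x}^t-\theta_i\ge1$ for $i=1,\dots,y_l^t-1$ and $\mathbf{w}\cdot\mathbf{x}^t-\theta_i\le-1$ for $i=y_r^t,\dots,K-1$. Losses: $l_i^t=\max(0,1+\theta_i^t-\mathbf{w}^t\cdot\mathbf{x}^t)$ for $1\le i\le y_l^t-1$, $l_i^t=\max(0,1+\mathbf{w}^t\cdot\mathbf{x}^t-\theta_i^t)$ for $y_r^t\le i\le K-1$, and $l_i^t=0$ for $y_l^t\le i\le y_r^t-1$. *)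

theory Defs
  imports "HOL-Analysis.Analysis"
begin

text \<open>Vectors in R^d are real^'d. Threshold vectors theta in R^(K-1) are functions
  nat => real of which only the coordinates 1..K-1 are used.\<close>

definition pa_feasible ::
  "nat \<Rightarrow> real^'d \<Rightarrow> nat \<Rightarrow> nat \<Rightarrow> real^'d \<Rightarrow> (nat \<Rightarrow> real) \<Rightarrow> bool" where
  "pa_feasible K x yl yr w \<theta> \<longleftrightarrow>
     (\<forall>i\<in>{1..<yl}. w \<bullet> x - \<theta> i \<ge> 1) \<and> (\<forall>i\<in>{yr..K-1}. w \<bullet> x - \<theta> i \<le> -1)"

definition pa_obj ::
  "nat \<Rightarrow> real^'d \<Rightarrow> (nat \<Rightarrow> real) \<Rightarrow> real^'d \<Rightarrow> (nat \<Rightarrow> real) \<Rightarrow> real" where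
  "pa_obj K w0 \<theta>0 w \<theta> = (1/2) * (norm (w - w0))^2 + (1/2) * (\<Sum>i=1..K-1. (\<theta> i - \<theta>0 i)^2)"

definition pa_step ::
  "nat \<Rightarrow> real^'d \<Rightarrow> nat \<Rightarrow> nat \<Rightarrow> real^'d \<Rightarrow> (nat \<Rightarrow> real) \<Rightarrow> real^'d \<Rightarrow> (nat \<Rightarrow> real) \<Rightarrow> bool" where
  "pa_step K x yl yr w0 \<theta>0 w \<theta> \<longleftrightarrow>
     pa_feasible K x yl yr w \<theta> \<and>
     (\<forall>w' \<theta>'. pa_feasible K x yl yr w' \<theta>' \<longrightarrow> pa_obj K w0 \<theta>0 w \<theta> \<le> pa_obj K w0 \<theta>0 w' \<theta>')"

definition pa_loss ::
  "nat \<Rightarrow> real^'d \<Rightarrow> nat \<Rightarrow> nat \<Rightarrow> real^'d \<Rightarrow> (nat \<Rightarrow> real) \<Rightarrow> nat \<Rightarrow> real" where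
  "pa_loss K x yl yr w \<theta> i =
     (if 1 \<le> i \<and> i < yl then max 0 (1 + \<theta> i - w \<bullet> x)
      else if yr \<le> i \<and> i \<le> K - 1 then max 0 (1 + w \<bullet> x - \<theta> i)
      else 0)"

end

theory Submission
  imports Defs
begin

definition nrm :: "nat \<Rightarrow> real^'d \<Rightarrow> (nat \<Rightarrow> real) \<Rightarrow> real" where
  "nrm K w th = (norm w)^2 + (\<Sum>i=1..K-1. (th i)^2)"

lemma nrm_nonneg: "nrm K w th \<ge> 0"
  unfolding nrm_def by (intro add_nonneg_nonneg sum_nonneg) auto

lemma sq_sum_bound:
  fixes a r A :: real and c :: "nat \<Rightarrow> real"
  assumes S: "finite S" "card S = m" and ar: "a^2 \<le> r*A" and r: "r \<ge> 0" and A: "A \<ge> 0"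
  shows "(\<Sum>i\<in>S. (a - c i)^2) \<le> (1 + m*r)*(A + (\<Sum>i\<in>S. (c i)^2))"
proof (cases "m * r = 0")
  case True
  show ?thesis
  proof (cases "m = 0")
    case True
    then have "S = {}" using S by auto
    then show ?thesis using A True by simp
  next
    case False
    then have "r = 0" using \<open>m*r=0\<close> by simp
    then have "a = 0" using ar by simp
    then show ?thesis using \<open>r = 0\<close> A by simp
  qed
next
  case False
  then have mr: "m*r > 0" using r by (simp add: order_le_less)
  have each: "m*r*(a - c i)^2 \<le> (m*r+1)*a^2 + m*r*(1+m*r)*(c i)^2" for i
  proof -
    have "0 \<le> (a + m*r*c i)^2" by simp
    then show ?thesis by (simp add: power2_eq_square algebra_simps)
  qed
  have "m*r*(\<Sum>i\<in>S. (a - c i)^2) = (\<Sum>i\<in>S. m*r*(a - c i)^2)" by (simp add: sum_distrib_left)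
  also have "\<dots> \<le> (\<Sum>i\<in>S. (m*r+1)*a^2 + m*r*(1+m*r)*(c i)^2)" by (rule sum_mono, rule each)
  also have "\<dots> = m*((m*r+1)*a^2) + m*r*(1+m*r)*(\<Sum>i\<in>S. (c i)^2)"
    using S by (simp add: sum.distrib sum_distrib_left)
  also have "\<dots> \<le> m*((m*r+1)*(r*A)) + m*r*(1+m*r)*(\<Sum>i\<in>S. (c i)^2)"
    using ar r by (intro add_right_mono mult_left_mono) auto
  also have "\<dots> = m*r*((1 + m*r)*(A + (\<Sum>i\<in>S. (c i)^2)))" by (simp add: algebra_simps)
  finally show ?thesis using mr mult_le_cancel_left_pos by blast
qed

lemma step_loss:
  assumes feas: "pa_feasible K x yl yr w' th'" and lab: "1 \<le> yl" "yl \<le> yr" "yr \<le> K"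
  shows "(\<Sum>i=1..K-1. (pa_loss K x yl yr w th i)^2)
     \<le> (1 + real (K - 1 - (yr - yl)) * (norm x)^2) * nrm K (w' - w) (\<lambda>i. th' i - th i)"
proof -
  define S where "S = {1..<yl} \<union> {yr..K-1}"
  define a where "a = (w' - w) \<bullet> x"
  define c where "c = (\<lambda>i. th' i - th i)"
  have SS: "S \<subseteq> {1..K-1}" using lab unfolding S_def by auto
  have fS: "finite S" unfolding S_def by auto
  have cardS: "card S = K - 1 - (yr - yl)"
  proof -
    have "card S = card {1..<yl} + card {yr..K-1}" unfolding S_def
      by (rule card_Un_disjoint) (use lab in auto)
    then show ?thesis using lab by simp
  qed
  have pt: "(pa_loss K x yl yr w th i)^2 \<le> (if i \<in> S then (a - c i)^2 else 0)" for i
  proof (cases "i \<in> {1..<yl}")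
    case True
    then have f: "w' \<bullet> x - th' i \<ge> 1" using feas unfolding pa_feasible_def by auto
    have e: "a - c i = (w' \<bullet> x - th' i) - (w \<bullet> x - th i)"
      unfolding a_def c_def by (simp add: inner_diff_left)
    have "pa_loss K x yl yr w th i = max 0 (1 + th i - w \<bullet> x)" using True unfolding pa_loss_def by auto
    moreover have "0 \<le> max 0 (1 + th i - w \<bullet> x)" by simp
    moreover have "max 0 (1 + th i - w \<bullet> x) \<le> \<bar>a - c i\<bar>" using f e by simp
    ultimately have "(pa_loss K x yl yr w th i)^2 \<le> \<bar>a - c i\<bar>^2" by (metis power_mono)
    then show ?thesis using True unfolding S_def by simp
  next
    case False
    show ?thesis
    proof (cases "i \<in> {yr..K-1}")
      case True
      then have f: "w' \<bullet> x - th' i \<le> -1" using feas unfolding pa_feasible_def by auto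
      have e: "a - c i = (w' \<bullet> x - th' i) - (w \<bullet> x - th i)"
        unfolding a_def c_def by (simp add: inner_diff_left)
      have "pa_loss K x yl yr w th i = max 0 (1 + w \<bullet> x - th i)" using True False lab unfolding pa_loss_def by auto
      moreover have "0 \<le> max 0 (1 + w \<bullet> x - th i)" by simp
      moreover have "max 0 (1 + w \<bullet> x - th i) \<le> \<bar>a - c i\<bar>" using f e by simp
      ultimately have "(pa_loss K x yl yr w th i)^2 \<le> \<bar>a - c i\<bar>^2" by (metis power_mono)
      then show ?thesis using True unfolding S_def by simp
    next
      case False2: False
      then have "pa_loss K x yl yr w th i = 0" using False unfolding pa_loss_def by auto
      then show ?thesis by simp
    qed
  qed
  have "(\<Sum>i=1..K-1. (pa_loss K x yl yr w th i)^2) \<le> (\<Sum>i=1..K-1. (if i \<in> S then (a - c i)^2 else 0))"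
    by (rule sum_mono) (rule pt)
  also have "\<dots> = (\<Sum>i\<in>{1..K-1} \<inter> S. (a - c i)^2)" by (rule sum.inter_restrict[symmetric]) simp
  also have "\<dots> = (\<Sum>i\<in>S. (a - c i)^2)" using SS by (simp add: Int_absorb1)
  also have "\<dots> \<le> (1 + real (K - 1 - (yr - yl)) * (norm x)^2) * ((norm (w' - w))^2 + (\<Sum>i\<in>S. (c i)^2))"
  proof (rule sq_sum_bound[OF fS cardS])
    have "\<bar>a\<bar> \<le> norm (w' - w) * norm x" unfolding a_def by (rule Cauchy_Schwarz_ineq2)
    then have "a^2 \<le> (norm (w' - w) * norm x)^2"
      by (metis abs_ge_zero power2_abs power_mono)
    then show "a^2 \<le> (norm x)^2 * (norm (w' - w))^2" by (simp add: power_mult_distrib mult.commute)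
  qed auto
  also have "\<dots> \<le> (1 + real (K - 1 - (yr - yl)) * (norm x)^2) * nrm K (w' - w) (\<lambda>i. th' i - th i)"
    unfolding nrm_def c_def
    by (intro mult_left_mono add_left_mono sum_mono2) (use SS in auto)
  finally show ?thesis .
qed

lemma nrm_expand:
  "nrm K (p + s *\<^sub>R q) (\<lambda>i. f i + s * g i)
     = nrm K p f + 2 * s * (p \<bullet> q + (\<Sum>i=1..K-1. f i * g i)) + s^2 * nrm K q g"
proof -
  have n: "(norm (p + s *\<^sub>R q))^2 = (norm p)^2 + 2 * s * (p \<bullet> q) + s^2 * (norm q)^2"
    unfolding power2_norm_eq_inner
    by (simp add: inner_add_left inner_add_right inner_commute power2_eq_square algebra_simps)
  have "(\<Sum>i=1..K-1. (f i + s * g i)^2)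
      = (\<Sum>i=1..K-1. (f i)^2 + 2 * s * (f i * g i) + s^2 * (g i)^2)"
    by (rule sum.cong) (simp_all add: power2_eq_square algebra_simps)
  also have "\<dots> = (\<Sum>i=1..K-1. (f i)^2) + 2 * s * (\<Sum>i=1..K-1. f i * g i) + s^2 * (\<Sum>i=1..K-1. (g i)^2)"
    by (simp add: sum.distrib sum_distrib_left)
  finally show ?thesis using n unfolding nrm_def by (simp add: algebra_simps)
qed

lemma nonneg_from_small:
  fixes a c :: real
  assumes c: "c \<ge> 0" and h: "\<And>s. 0 < s \<Longrightarrow> s \<le> 1 \<Longrightarrow> 0 \<le> 2 * s * a + s^2*c"
  shows "a \<ge> 0"
proof (rule ccontr)
  assume "\<not> a \<ge> 0"
  then have a: "a < 0" by simp
  show False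
  proof (cases "c \<le> -a")
    case True
    have "0 \<le> 2 * 1 * a + 1^2*c" by (rule h) auto
    then show False using True a by simp
  next
    case False
    define s where "s = -a / c"
    have cp: "c > 0" using False a by simp
    have s0: "0 < s" "s \<le> 1" using a cp False unfolding s_def by (auto simp: field_simps)
    have "0 \<le> 2 * s * a + s^2*c" by (rule h[OF s0])
    also have "2 * s * a + s^2*c = s * a" unfolding s_def using cp by (simp add: power2_eq_square field_simps)
    finally show False using s0 a by (simp add: zero_le_mult_iff)
  qed
qed

lemma proj:
  assumes st: "pa_step K x yl yr w0 th0 w1 th1" and fu: "pa_feasible K x yl yr u b"
  shows "nrm K (w1 - w0) (\<lambda>i. th1 i - th0 i) + nrm K (u - w1) (\<lambda>i. b i - th1 i)
          \<le> nrm K (u - w0) (\<lambda>i. b i - th0 i)"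
proof -
  define ip where "ip = (w1 - w0) \<bullet> (u - w1) + (\<Sum>i=1..K-1. (th1 i - th0 i) * (b i - th1 i))"
  have f1: "pa_feasible K x yl yr w1 th1" and mn: "\<And>w' t'. pa_feasible K x yl yr w' t' \<Longrightarrow>
     pa_obj K w0 th0 w1 th1 \<le> pa_obj K w0 th0 w' t'" using st unfolding pa_step_def by auto
  have objn: "pa_obj K w0 th0 w t = nrm K (w - w0) (\<lambda>i. t i - th0 i) / 2" for w t
    unfolding pa_obj_def nrm_def by simp
  have E: "nrm K ((w1 - w0) + s *\<^sub>R (u - w1)) (\<lambda>i. (th1 i - th0 i) + s * (b i - th1 i))
     = nrm K (w1 - w0) (\<lambda>i. th1 i - th0 i) + 2 * s * ip + s^2 * nrm K (u - w1) (\<lambda>i. b i - th1 i)" for s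
    unfolding ip_def by (rule nrm_expand)
  have "ip \<ge> 0"
  proof (rule nonneg_from_small[OF nrm_nonneg])
    fix s :: real assume s: "0 < s" "s \<le> 1"
    define ws where "ws = w1 + s *\<^sub>R (u - w1)"
    define ts where "ts = (\<lambda>i. th1 i + s * (b i - th1 i))"
    have fs: "pa_feasible K x yl yr ws ts"
    proof -
      have l: "ws \<bullet> x - ts i = (1 - s) * (w1 \<bullet> x - th1 i) + s * (u \<bullet> x - b i)" for i
        unfolding ws_def ts_def by (simp add: inner_add_left inner_diff_left algebra_simps)
      have A: "1 \<le> ws \<bullet> x - ts i" if "i \<in> {1..<yl}" for i
      proof -
        have "1 \<le> w1 \<bullet> x - th1 i" "1 \<le> u \<bullet> x - b i"
          using f1 fu that unfolding pa_feasible_def by auto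
        then have "(1 - s) * 1 \<le> (1 - s) * (w1 \<bullet> x - th1 i)" "s * 1 \<le> s * (u \<bullet> x - b i)"
          using s by (auto intro!: mult_left_mono simp del: mult_1_right)
        then show ?thesis unfolding l by simp
      qed
      have B: "ws \<bullet> x - ts i \<le> -1" if "i \<in> {yr..K-1}" for i
      proof -
        have "w1 \<bullet> x - th1 i \<le> -1" "u \<bullet> x - b i \<le> -1"
          using f1 fu that unfolding pa_feasible_def by auto
        then have "(1 - s) * (w1 \<bullet> x - th1 i) \<le> (1 - s) * (-1)" "s * (u \<bullet> x - b i) \<le> s * (-1)"
          using s by (simp_all only: mult_left_mono)
        then show ?thesis unfolding l by simp
      qed
      show ?thesis unfolding pa_feasible_def using A B by auto
    qed
    have "pa_obj K w0 th0 w1 th1 \<le> pa_obj K w0 th0 ws ts" by (rule mn[OF fs])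
    moreover have "ws - w0 = (w1 - w0) + s *\<^sub>R (u - w1)" unfolding ws_def by simp
    moreover have "(\<lambda>i. ts i - th0 i) = (\<lambda>i. (th1 i - th0 i) + s * (b i - th1 i))" unfolding ts_def by auto
    ultimately have "nrm K (w1 - w0) (\<lambda>i. th1 i - th0 i) \<le> nrm K ((w1 - w0) + s *\<^sub>R (u - w1)) (\<lambda>i. (th1 i - th0 i) + s * (b i - th1 i))"
      unfolding objn by simp
    then show "0 \<le> 2 * s * ip + s^2 * nrm K (u - w1) (\<lambda>i. b i - th1 i)" unfolding E by simp
  qed
  moreover have "nrm K (u - w0) (\<lambda>i. b i - th0 i) = nrm K (w1 - w0) (\<lambda>i. th1 i - th0 i) + 2 * 1 * ip + 1^2 * nrm K (u - w1) (\<lambda>i. b i - th1 i)"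
  proof -
    have "u - w0 = (w1 - w0) + 1 *\<^sub>R (u - w1)" by simp
    moreover have "(\<lambda>i. b i - th0 i) = (\<lambda>i. (th1 i - th0 i) + 1 * (b i - th1 i))" by auto
    ultimately show ?thesis using E[of 1] by simp
  qed
  ultimately show ?thesis by simp
qed

theorem corollary1:
  fixes K T :: nat
    and x :: "nat \<Rightarrow> real^'d"
    and yl yr :: "nat \<Rightarrow> nat"
    and w :: "nat \<Rightarrow> real^'d"
    and \<theta> :: "nat \<Rightarrow> nat \<Rightarrow> real"
    and u :: "real^'d"
    and b :: "nat \<Rightarrow> real"
  assumes T_pos: "T \<ge> 1"
    and labels: "\<And>t. t \<in> {1..T} \<Longrightarrow> 1 \<le> yl t \<and> yl t \<le> yr t \<and> yr t \<le> K"
    and w_init: "w 1 = 0"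
    and theta_init: "\<theta> 1 = (\<lambda>i. 0)"
    and pa: "\<And>t. t \<in> {1..<T} \<Longrightarrow>
               pa_step K (x t) (yl t) (yr t) (w t) (\<theta> t) (w (Suc t)) (\<theta> (Suc t))"
    and ideal_l: "\<And>t i. t \<in> {1..T} \<Longrightarrow> i \<in> {1..<yl t} \<Longrightarrow> u \<bullet> x t - b i \<ge> 1"
    and ideal_r: "\<And>t i. t \<in> {1..T} \<Longrightarrow> i \<in> {yr t..K-1} \<Longrightarrow> u \<bullet> x t - b i \<le> -1"
  shows "(\<Sum>t=1..T. \<Sum>i=1..K-1. (pa_loss K (x t) (yl t) (yr t) (w t) (\<theta> t) i)^2)
           \<le> ((norm u)^2 + (\<Sum>i=1..K-1. (b i)^2)) *
             (1 + (Max ((\<lambda>t. (norm (x t))^2) ` {1..T}))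
                  * (real K - real (Min ((\<lambda>t. yr t - yl t) ` {1..T})) - 1))"
proof -
  define R2 where "R2 = Max ((\<lambda>t. (norm (x t))^2) ` {1..T})"
  define c where "c = Min ((\<lambda>t. yr t - yl t) ` {1..T})"
  define C where "C = 1 + R2 * (real K - real c - 1)"
  define L where "L t = (\<Sum>i=1..K-1. (pa_loss K (x t) (yl t) (yr t) (w t) (\<theta> t) i)^2)" for t
  define D where "D t = nrm K (w (Suc t) - w t) (\<lambda>i. \<theta> (Suc t) i - \<theta> t i)" for t
  define E where "E t = nrm K (u - w t) (\<lambda>i. b i - \<theta> t i)" for t
  have feas: "pa_feasible K (x t) (yl t) (yr t) u b" if "t \<in> {1..T}" for t
    unfolding pa_feasible_def using ideal_l[OF that] ideal_r[OF that] by auto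
  have Ct: "1 + real (K - 1 - (yr t - yl t)) * (norm (x t))^2 \<le> C" if t: "t \<in> {1..T}" for t
  proof -
    have lab: "1 \<le> yl t" "yl t \<le> yr t" "yr t \<le> K" using labels[OF t] by auto
    have r: "(norm (x t))^2 \<le> R2" unfolding R2_def by (rule Max_ge) (use t in auto)
    have cc: "c \<le> yr t - yl t" unfolding c_def by (rule Min_le) (use t in auto)
    have m: "real (K - 1 - (yr t - yl t)) \<le> real K - real c - 1" using lab cc by linarith
    have "real (K - 1 - (yr t - yl t)) * (norm (x t))^2 \<le> (real K - real c - 1) * R2"
      by (rule mult_mono[OF m r]) (use lab cc in auto)
    then show ?thesis unfolding C_def by (simp add: mult.commute)
  qed
  have Lt: "L t \<le> C * D t" if t: "t \<in> {1..<T}" for t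
  proof -
    have t': "t \<in> {1..T}" using t by auto
    have lab: "1 \<le> yl t" "yl t \<le> yr t" "yr t \<le> K" using labels[OF t'] by auto
    have f: "pa_feasible K (x t) (yl t) (yr t) (w (Suc t)) (\<theta> (Suc t))"
      using pa[OF t] unfolding pa_step_def by auto
    have "L t \<le> (1 + real (K - 1 - (yr t - yl t)) * (norm (x t))^2) * D t"
      unfolding L_def D_def by (rule step_loss[OF f lab])
    also have "\<dots> \<le> C * D t" by (rule mult_right_mono[OF Ct[OF t']]) (simp add: D_def nrm_nonneg)
    finally show ?thesis .
  qed
  have LT: "L T \<le> C * E T"
  proof -
    have t': "T \<in> {1..T}" using T_pos by auto
    have lab: "1 \<le> yl T" "yl T \<le> yr T" "yr T \<le> K" using labels[OF t'] by auto
    have "L T \<le> (1 + real (K - 1 - (yr T - yl T)) * (norm (x T))^2) * E T"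
      unfolding L_def E_def by (rule step_loss[OF feas[OF t'] lab])
    also have "\<dots> \<le> C * E T" by (rule mult_right_mono[OF Ct[OF t']]) (simp add: E_def nrm_nonneg)
    finally show ?thesis .
  qed
  have tele: "(\<Sum>t=1..<n. D t) + E n \<le> E 1" if "1 \<le> n" "n \<le> T" for n
    using that
  proof (induction n)
    case 0 then show ?case by simp
  next
    case (Suc n)
    show ?case
    proof (cases "n = 0")
      case True then show ?thesis by simp
    next
      case False
      then have n1: "n \<in> {1..<T}" using Suc.prems by auto
      have IH: "(\<Sum>t=1..<n. D t) + E n \<le> E 1" using Suc.IH Suc.prems False by auto
      have "D n + E (Suc n) \<le> E n" unfolding D_def E_def
        by (rule proj[OF pa[OF n1] feas]) (use n1 in auto)
      moreover have "(\<Sum>t=1..<Suc n. D t) = (\<Sum>t=1..<n. D t) + D n" using False by simp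
      ultimately show ?thesis using IH by simp
    qed
  qed
  have E1: "E 1 = (norm u)^2 + (\<Sum>i=1..K-1. (b i)^2)"
    unfolding E_def nrm_def using w_init theta_init by simp
  have Cpos: "C \<ge> 0"
  proof -
    have "1 + real (K - 1 - (yr T - yl T)) * (norm (x T))^2 \<le> C" by (rule Ct) (use T_pos in auto)
    moreover have "0 \<le> 1 + real (K - 1 - (yr T - yl T)) * (norm (x T))^2" by simp
    ultimately show ?thesis by linarith
  qed
  have "(\<Sum>t=1..T. L t) = (\<Sum>t=1..<T. L t) + L T"
  proof -
    have "{1..T} = insert T {1..<T}" using T_pos by auto
    then show ?thesis by simp
  qed
  also have "\<dots> \<le> (\<Sum>t=1..<T. C * D t) + C * E T"
    by (intro add_mono sum_mono Lt LT)
  also have "\<dots> = C * ((\<Sum>t=1..<T. D t) + E T)" by (simp add: sum_distrib_left algebra_simps)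
  also have "\<dots> \<le> C * E 1" by (rule mult_left_mono[OF tele Cpos]) (use T_pos in auto)
  finally show ?thesis unfolding L_def E1 C_def R2_def c_def by (simp add: mult.commute)
qed

end
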